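(* Let $G_1$ and $G_2$ be two vertex-disjoint simple connected graphs with $|V(G_1)|=n_1$, $|V(G_2)|=n_2$, $|E(G_1)|=m_1$, $|E(G_2)|=m_2$. Then the edge S-join $G_1\underline{\vee}_S G_2$ satisfies \[ F(G_1\underline{\vee}_S G_2)=F(G_1)+F(G_2)+3m_1M_1(G_2)+6m_1^{2}m_2+m_1(n_2+2)^3+n_2m_1^{3}. \]
   Context: For a simple graph $G$ and $v\in V(G)$, $d_G(v)$ is the degree of $v$. The first Zagreb index is $M_1(G)=\sum_{v\in V(G)}d_G(v)^2$ and the F-index is $F(G)=\sum_{v\in V(G)}d_G(v)^3$. The subdivision graph $S(G)$ is obtained from $G$ by inserting a new vertex into each edge of $G$ (replacing each edge by a path of length 2); let $I(G)$ denote the set of these inserted vertices, so $V(S(G))=V(G)\cup I(G)$. The edge S-join $G_1\underline{\vee}_S G_2$ is the graph obtained from $S(G_1)$ and $G_2$ (taken vertex-disjoint) by joining each vertex of $I(G_1)$ to every vertex of $G_2$ by an edge. *)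

theory Defs
  imports Main
begin

definition simple_graph :: "'a set \<Rightarrow> 'a set set \<Rightarrow> bool" where
  "simple_graph V E \<longleftrightarrow> finite V \<and> (\<forall>e\<in>E. \<exists>u v. u \<noteq> v \<and> e = {u, v} \<and> u \<in> V \<and> v \<in> V)"

definition adj_rel :: "'a set set \<Rightarrow> ('a \<times> 'a) set" where
  "adj_rel E = {(u, v). {u, v} \<in> E}"

definition connected_graph :: "'a set \<Rightarrow> 'a set set \<Rightarrow> bool" where
  "connected_graph V E \<longleftrightarrow> V \<noteq> {} \<and> (\<forall>u\<in>V. \<forall>v\<in>V. (u, v) \<in> (adj_rel E)\<^sup>*)"

definition degree :: "'a set set \<Rightarrow> 'a \<Rightarrow> nat" where
  "degree E v = card {e \<in> E. v \<in> e}"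

definition zagreb1 :: "'a set \<Rightarrow> 'a set set \<Rightarrow> nat" where
  "zagreb1 V E = (\<Sum>v\<in>V. degree E v ^ 2)"

definition findex :: "'a set \<Rightarrow> 'a set set \<Rightarrow> nat" where
  "findex V E = (\<Sum>v\<in>V. degree E v ^ 3)"

text \<open>Vertices of the edge S-join: original vertices of G1, inserted vertices of S(G1)
  (one per edge of G1, labelled by that edge), and vertices of G2.\<close>
datatype ('a, 'b) sj_vertex = Old 'a | Ins "'a set" | Right 'b

definition sjoin_V :: "'a set \<Rightarrow> 'a set set \<Rightarrow> 'b set \<Rightarrow> ('a, 'b) sj_vertex set" where
  "sjoin_V V1 E1 V2 = Old ` V1 \<union> Ins ` E1 \<union> Right ` V2"

definition sjoin_E :: "'a set set \<Rightarrow> 'b set \<Rightarrow> 'b set set \<Rightarrow> ('a, 'b) sj_vertex set set" where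
  "sjoin_E E1 V2 E2 =
     {{Old u, Ins e} | u e. e \<in> E1 \<and> u \<in> e}
   \<union> {{Right x, Right y} | x y. {x, y} \<in> E2}
   \<union> {{Ins e, Right w} | e w. e \<in> E1 \<and> w \<in> V2}"

end

theory Submission
  imports Defs
begin

lemma handshake:
  assumes "simple_graph V E"
  shows "(\<Sum>v\<in>V. degree E v) = 2 * card E"
proof -
  have fV: "finite V" using assms simple_graph_def by auto
  have c2: "card e = 2 \<and> e \<subseteq> V" if eE: "e \<in> E" for e
  proof -
    obtain u v where "u \<noteq> v" "e = {u,v}" "u \<in> V" "v \<in> V"
      using bspec[OF conjunct2[OF assms[unfolded simple_graph_def]] eE] by blast
    then show ?thesis by simp
  qed
  have sub: "E \<subseteq> Pow V" using c2 by auto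
  have fE: "finite E" using fV sub finite_Pow_iff finite_subset by metis
  have dg: "degree E v = (\<Sum>e\<in>E. if v \<in> e then 1 else 0)" for v
    unfolding degree_def using sum.inter_filter[OF fE, of "\<lambda>_. 1::nat" "\<lambda>e. v \<in> e"]
    by simp
  have "(\<Sum>v\<in>V. degree E v) = (\<Sum>v\<in>V. \<Sum>e\<in>E. if v \<in> e then 1 else 0)"
    by (simp add: dg)
  also have "\<dots> = (\<Sum>e\<in>E. \<Sum>v\<in>V. if v \<in> e then 1 else 0)" by (rule sum.swap)
  also have "\<dots> = (\<Sum>e\<in>E. card e)"
  proof (rule sum.cong)
    fix e assume "e \<in> E"
    then have "{v \<in> V. v \<in> e} = e" using c2 by auto
    then show "(\<Sum>v\<in>V. if v \<in> e then 1 else 0) = card e"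
      using sum.inter_filter[OF fV, of "\<lambda>_. 1::nat" "\<lambda>v. v \<in> e"] by simp
  qed simp
  also have "\<dots> = (\<Sum>e\<in>E. 2)" using c2 by simp
  finally show ?thesis by simp
qed

lemma right_edges: assumes e2: "\<And>e. e \<in> E2 \<Longrightarrow> \<exists>u v. u \<noteq> v \<and> e = {u, v}"
  shows "{{Right x, Right y} | x y. {x, y} \<in> E2} = (\<lambda>e. Right ` e) ` (E2::'b set set)"
proof
  show "{{Right x, Right y} | x y. {x, y} \<in> E2} \<subseteq> (\<lambda>e. Right ` e) ` E2"
  proof
    fix f assume "f \<in> {{Right x, Right y} | x y. {x, y} \<in> E2}"
    then obtain x y where "f = {Right x, Right y}" "{x,y} \<in> E2" by blast
    then show "f \<in> (\<lambda>e. Right ` e) ` E2" by (intro image_eqI[of _ _ "{x,y}"]) auto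
  qed
  show "(\<lambda>e. Right ` e) ` E2 \<subseteq> {{Right x, Right y} | x y. {x, y} \<in> E2}"
  proof
    fix f assume "f \<in> (\<lambda>e. Right ` e) ` E2"
    then obtain e where "e \<in> E2" "f = Right ` e" by blast
    with e2 obtain u v where "e = {u,v}" by blast
    with \<open>e \<in> E2\<close> \<open>f = Right ` e\<close> show "f \<in> {{Right x, Right y} | x y. {x, y} \<in> E2}" by (auto simp del: insert_image)
  qed
qed

theorem theorem2:
  fixes V1 :: "'a set" and E1 :: "'a set set" and V2 :: "'b set" and E2 :: "'b set set"
  assumes "simple_graph V1 E1" and "connected_graph V1 E1"
    and "simple_graph V2 E2" and "connected_graph V2 E2"
  shows "findex (sjoin_V V1 E1 V2) (sjoin_E E1 V2 E2)
      = findex V1 E1 + findex V2 E2 + 3 * card E1 * zagreb1 V2 E2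
        + 6 * card E1 ^ 2 * card E2 + card E1 * (card V2 + 2) ^ 3
        + card V2 * card E1 ^ 3"
proof -
  note g1 = assms(1) and g2 = assms(3)
  have fV1: "finite V1" using g1 simple_graph_def by auto
  have fV2: "finite V2" using g2 simple_graph_def by auto
  have e1: "card e = 2 \<and> e \<subseteq> V1 \<and> finite e" if eE: "e \<in> E1" for e
  proof -
    obtain u v where "u \<noteq> v" "e = {u,v}" "u \<in> V1" "v \<in> V1"
      using bspec[OF conjunct2[OF g1[unfolded simple_graph_def]] eE] by blast
    then show ?thesis by simp
  qed
  have e2: "\<exists>u v. u \<noteq> v \<and> e = {u, v}" if eE: "e \<in> E2" for e
    using bspec[OF conjunct2[OF g2[unfolded simple_graph_def]] eE] by blast
  have "E1 \<subseteq> Pow V1" using e1 by auto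
  then have fE1: "finite E1" using fV1 finite_Pow_iff finite_subset by metis
  have "E2 \<subseteq> Pow V2" using g2 unfolding simple_graph_def by auto
  then have fE2: "finite E2" using fV2 finite_Pow_iff finite_subset by metis
  define S where "S = sjoin_E E1 V2 E2"
  have Seq: "S = {{Old u, Ins e} | u e. e \<in> E1 \<and> u \<in> e}
     \<union> (\<lambda>e. Right ` e) ` E2 \<union> {{Ins e, Right w} | e w. e \<in> E1 \<and> w \<in> V2}"
    proof -
    have R: "{{Right x, Right y} | x y. {x, y} \<in> E2} = (\<lambda>e. Right ` e) ` E2"
      by (rule right_edges) (rule e2)
    show ?thesis unfolding S_def sjoin_E_def R ..
  qed
  define m1 where "m1 = card E1"
  define n2 where "n2 = card V2"
  have dOld: "degree S (Old u) = degree E1 u" for u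
  proof -
    have "{f \<in> S. Old u \<in> f} = (\<lambda>e. {Old u, Ins e}) ` {e \<in> E1. u \<in> e}"
      unfolding Seq by auto
    moreover have "inj_on (\<lambda>e. {Old u, Ins e}) {e \<in> E1. u \<in> e}"
      by (auto simp: inj_on_def doubleton_eq_iff)
    then have "card ((\<lambda>e. {Old u, Ins e}) ` {e \<in> E1. u \<in> e}) = card {e \<in> E1. u \<in> e}"
      by (rule card_image)
    ultimately show ?thesis unfolding degree_def by simp
  qed
  have dIns: "degree S (Ins e) = n2 + 2" if "e \<in> E1" for e
  proof -
    have "{f \<in> S. Ins e \<in> f} = (\<lambda>u. {Old u, Ins e}) ` e \<union> (\<lambda>w. {Ins e, Right w}) ` V2"
      unfolding Seq using that by auto
    moreover have "inj_on (\<lambda>u. {Old u, Ins e}) e"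
      by (auto simp: inj_on_def doubleton_eq_iff)
    moreover have "inj_on (\<lambda>w. {Ins e, Right w}) V2"
      by (auto simp: inj_on_def doubleton_eq_iff)
    moreover have "(\<lambda>u. {Old u, Ins e}) ` e \<inter> (\<lambda>w. {Ins e, Right w}) ` V2 = {}"
      by (auto simp: doubleton_eq_iff)
    ultimately have "degree S (Ins e) = card ((\<lambda>u. {Old u, Ins e}) ` e :: ('a,'b) sj_vertex set set) + card ((\<lambda>w. {Ins e, Right w}) ` V2)"
      unfolding degree_def using e1[OF that] fV2 by (simp add: card_Un_disjoint)
    also have "\<dots> = card e + card V2" using card_image[OF \<open>inj_on (\<lambda>u. {Old u, Ins e} :: ('a,'b) sj_vertex set) e\<close>] card_image[OF \<open>inj_on (\<lambda>w. {Ins e, Right w}) V2\<close>]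
      by simp
    finally show ?thesis using e1[OF that] unfolding n2_def by simp
  qed
  have dRight: "degree S (Right x) = degree E2 x + m1" if xV: "x \<in> V2" for x
  proof -
    have "{f \<in> S. Right x \<in> f} = (\<lambda>e. Right ` e) ` {e \<in> E2. x \<in> e}
        \<union> (\<lambda>e. {Ins e, Right x}) ` E1"
      unfolding Seq using xV by auto
    moreover have "inj_on (\<lambda>e. Right ` e) {e \<in> E2. x \<in> e}"
      by (auto simp: inj_on_def inj_image_eq_iff)
    moreover have "inj_on (\<lambda>e. {Ins e, Right x}) E1"
      by (auto simp: inj_on_def doubleton_eq_iff)
    moreover have "(\<lambda>e. Right ` e) ` {e \<in> E2. x \<in> e} \<inter> (\<lambda>e. {Ins e, Right x}) ` E1 = {}"
      by auto
    ultimately have "degree S (Right x) = card ((\<lambda>e. Right ` e) ` {e \<in> E2. x \<in> e} :: ('a,'b) sj_vertex set set) + card ((\<lambda>e. {Ins e, Right x}) ` E1)"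
      unfolding degree_def using fE1 fE2 by (simp add: card_Un_disjoint)
    also have "\<dots> = card {e \<in> E2. x \<in> e} + card E1" using card_image[OF \<open>inj_on (\<lambda>e. Right ` e :: ('a,'b) sj_vertex set) {e \<in> E2. x \<in> e}\<close>] card_image[OF \<open>inj_on (\<lambda>e. {Ins e, Right x}) E1\<close>]
      by simp
    finally show ?thesis unfolding m1_def degree_def .
  qed
  have disj1: "Old ` V1 \<inter> Ins ` E1 = {}" by auto
  have disj2: "(Old ` V1 \<union> Ins ` E1) \<inter> Right ` V2 = {}" by auto
  have sumsplit: "findex (sjoin_V V1 E1 V2) S
      = (\<Sum>v\<in>Old ` V1. degree S v ^ 3) + (\<Sum>v\<in>Ins ` E1. degree S v ^ 3)
        + (\<Sum>v\<in>Right ` V2. degree S v ^ 3)"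
    unfolding findex_def sjoin_V_def
    apply (subst sum.union_disjoint)
       apply (use fV1 fE1 fV2 disj2 in auto)[3]
    apply (subst sum.union_disjoint)
       apply (use fV1 fE1 disj1 in auto)[3]
    apply (rule refl)
    done
  have p1: "(\<Sum>v\<in>Old ` V1. degree S v ^ 3) = findex V1 E1"
    unfolding findex_def by (simp add: sum.reindex inj_on_def dOld)
  have p2: "(\<Sum>v\<in>Ins ` E1. degree S v ^ 3) = m1 * (n2 + 2) ^ 3"
    unfolding m1_def by (simp add: sum.reindex inj_on_def dIns)
  have p3a: "(\<Sum>v\<in>Right ` V2. degree S v ^ 3) = (\<Sum>x\<in>V2. (degree E2 x + m1) ^ 3)"
    by (simp add: sum.reindex inj_on_def dRight)
  have expand: "(d + m) ^ 3 = d ^ 3 + 3 * m * d ^ 2 + 3 * m ^ 2 * d + m ^ 3" for d m :: nat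
    by (simp add: power3_eq_cube power2_eq_square algebra_simps)
  have "(\<Sum>x\<in>V2. (degree E2 x + m1) ^ 3)
      = (\<Sum>x\<in>V2. degree E2 x ^ 3) + 3 * m1 * (\<Sum>x\<in>V2. degree E2 x ^ 2)
        + 3 * m1 ^ 2 * (\<Sum>x\<in>V2. degree E2 x) + n2 * m1 ^ 3"
    unfolding expand n2_def by (simp add: sum.distrib sum_distrib_left)
  also have "\<dots> = findex V2 E2 + 3 * m1 * zagreb1 V2 E2 + 6 * m1 ^ 2 * card E2 + n2 * m1 ^ 3"
    unfolding findex_def zagreb1_def handshake[OF g2] by simp
  finally have p3: "(\<Sum>v\<in>Right ` V2. degree S v ^ 3)
      = findex V2 E2 + 3 * m1 * zagreb1 V2 E2 + 6 * m1 ^ 2 * card E2 + n2 * m1 ^ 3"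
    using p3a by simp
  show ?thesis
    unfolding S_def[symmetric] sumsplit p1 p2 p3 m1_def[symmetric] n2_def[symmetric]
    by simp
qed

end
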